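(* Assume the setting below and sharp missingness: $M_i(1)=M_i(0)$ for all $1\le i\le n$. Fix $\boldsymbol\delta\in\mathbb R^n$ and $b\in\mathbb R$, and let $\boldsymbol w\in\mathbb R^n$ have coordinates $w_i=Y_i-\delta_iZ_i$ if $M_i=1$ and $w_i=b$ if $M_i=0$. Then $\tilde p^{\texttt c}_{\boldsymbol Z,\boldsymbol\delta,b}:=G_{\mathrm R,\phi}(t_{\mathrm R,\phi}(\boldsymbol Z,\boldsymbol w))$ is a valid p-value for $H_{\boldsymbol\delta}:\boldsymbol\tau=\boldsymbol\delta$: if $H_{\boldsymbol\delta}$ holds, $\mathbb P(\tilde p^{\texttt c}_{\boldsymbol Z,\boldsymbol\delta,b}\le\alpha)\le\alpha$ for all $\alpha\in(0,1)$.
   Context: There are $n$ units with fixed potential outcomes $Y_i^\star(0),Y_i^\star(1)\in\mathbb R$ and fixed potential missingness indicators $M_i(0),M_i(1)\in\{0,1\}$; $\tau_i=Y_i^\star(1)-Y_i^\star(0)$, $\boldsymbol\tau=(\tau_1,\dots,\tau_n)^\intercal$. $\boldsymbol Z\in\{0,1\}^n$ is from a completely randomized experiment (CRE): uniform over vectors with exactly $n_1$ ones ($n_1,n_0\ge1$ fixed, $n_1+n_0=n$), independent of all potential quantities; probabilities are over $\boldsymbol Z$. $M_i=Z_iM_i(1)+(1-Z_i)M_i(0)$; the realized outcome $Z_iY_i^\star(1)+(1-Z_i)Y_i^\star(0)$ is observed, denoted $Y_i$, iff $M_i=1$. $\psi_{i,j}(y,y')=\mathbf 1\{y>y'\}+\mathbf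 1\{y=y'\}\mathbf 1\{i\ge j\}$; $\mathrm{rank}_i(\boldsymbol y)=\sum_j\psi_{i,j}(y_i,y_j)$; $\phi$ nondecreasing real function on the nonnegative integers; $t_{\mathrm R,\phi}(\boldsymbol z,\boldsymbol y)$ is either $\sum_i z_i\phi(\mathrm{rank}_i(\boldsymbol y))$ or $\sum_i z_i\phi(\sum_j(1-z_j)\psi_{i,j}(y_i,y_j))$ (result holds for either); $G_{\mathrm R,\phi}(c)=\mathbb P(t_{\mathrm R,\phi}(\boldsymbol A,\boldsymbol y_0)\ge c)$ with $\boldsymbol A$ from the CRE and $\boldsymbol y_0\in\mathbb R^n$ any fixed vector (independent of $\boldsymbol y_0$). *)

theory Defs
  imports Complex_Main
begin

text \<open>Units are indexed by 0,...,n-1. Treatment vectors z :: nat => nat take values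
in {0,1} on {..<n} and are 0 outside.\<close>

definition CRE :: "nat \<Rightarrow> nat \<Rightarrow> (nat \<Rightarrow> nat) set" where
  "CRE n n1 = {z. (\<forall>i<n. z i \<in> {0,1}) \<and> (\<forall>i. n \<le> i \<longrightarrow> z i = 0) \<and> (\<Sum>i<n. z i) = n1}"

definition prob_CRE :: "nat \<Rightarrow> nat \<Rightarrow> ((nat \<Rightarrow> nat) \<Rightarrow> bool) \<Rightarrow> real" where
  "prob_CRE n n1 E = real (card {z \<in> CRE n n1. E z}) / real (card (CRE n n1))"

definition psi :: "nat \<Rightarrow> nat \<Rightarrow> real \<Rightarrow> real \<Rightarrow> nat" where
  "psi i j y y' = (if y > y' then 1 else if y = y' \<and> i \<ge> j then 1 else 0)"

definition rank :: "nat \<Rightarrow> (nat \<Rightarrow> real) \<Rightarrow> nat \<Rightarrow> nat" where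
  "rank n y i = (\<Sum>j<n. psi i j (y i) (y j))"

definition tR :: "bool \<Rightarrow> (nat \<Rightarrow> real) \<Rightarrow> nat \<Rightarrow> (nat \<Rightarrow> nat) \<Rightarrow> (nat \<Rightarrow> real) \<Rightarrow> real" where
  "tR v phi n z y =
     (if v then (\<Sum>i<n. real (z i) * phi (rank n y i))
      else (\<Sum>i<n. real (z i) * phi (\<Sum>j<n. (1 - z j) * psi i j (y i) (y j))))"

definition GR :: "bool \<Rightarrow> (nat \<Rightarrow> real) \<Rightarrow> nat \<Rightarrow> nat \<Rightarrow> (nat \<Rightarrow> real) \<Rightarrow> real \<Rightarrow> real" where
  "GR v phi n n1 y0 c = prob_CRE n n1 (\<lambda>A. tR v phi n A y0 \<ge> c)"

definition w_vec :: "(nat \<Rightarrow> real) \<Rightarrow> (nat \<Rightarrow> real) \<Rightarrow> (nat \<Rightarrow> bool) \<Rightarrow> (nat \<Rightarrow> bool)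
    \<Rightarrow> (nat \<Rightarrow> real) \<Rightarrow> real \<Rightarrow> (nat \<Rightarrow> nat) \<Rightarrow> nat \<Rightarrow> real" where
  "w_vec Y1 Y0 M1 M0 \<delta> b z i =
     (let Mi = (if z i = 1 then M1 i else M0 i);
          Yi = real (z i) * Y1 i + (1 - real (z i)) * Y0 i
      in if Mi then Yi - \<delta> i * real (z i) else b)"

end

theory Submission
  imports Defs "HOL-Combinatorics.Permutations" "HOL-Library.Product_Lexorder"
begin

lemma psi_lex: "psi i j a c = (if (c, j) \<le> (a, i) then 1 else 0)"
  unfolding psi_def by (auto simp: less_eq_prod_def)

lemma psi_zero: "psi i j 0 0 = (if j \<le> i then 1 else 0)"
  unfolding psi_def by auto

lemma tR_cong:
  assumes "\<forall>i<n. y i = y' i"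
  shows "tR v phi n z y = tR v phi n z y'"
  unfolding tR_def rank_def using assms by (auto intro!: sum.cong)

lemma tR_perm:
  assumes p: "p permutes {..<n}"
    and h: "\<forall>i<n. \<forall>j<n. psi i j (y i) (y j) = psi (p i) (p j) (y' (p i)) (y' (p j))"
  shows "tR v phi n z y = tR v phi n (z \<circ> inv p) y'"
proof -
  have ip: "\<And>i. inv p (p i) = i" using permutes_inverses(2)[OF p] by simp
  have pin: "\<And>i. i < n \<Longrightarrow> p i < n" using permutes_in_image[OF p] by simp
  have inner1: "(\<Sum>l<n. g l) = (\<Sum>j<n. g (p j))" for g :: "nat \<Rightarrow> real"
    using sum.permute[OF p, of g] by simp
  have inner2: "(\<Sum>l<n. g l) = (\<Sum>j<n. g (p j))" for g :: "nat \<Rightarrow> nat"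
    using sum.permute[OF p, of g] by simp
  have A: "(\<Sum>l<n. psi (p i) l (y' (p i)) (y' l)) = (\<Sum>j<n. psi i j (y i) (y j))" if "i < n" for i
    using inner2[of "\<lambda>l. psi (p i) l (y' (p i)) (y' l)"] h that by simp
  have B: "(\<Sum>l<n. (1 - z (inv p l)) * psi (p i) l (y' (p i)) (y' l))
      = (\<Sum>j<n. (1 - z j) * psi i j (y i) (y j))" if "i < n" for i
    using inner2[of "\<lambda>l. (1 - (z \<circ> inv p) l) * psi (p i) l (y' (p i)) (y' l)"] h that
    by (simp add: ip)
  show ?thesis
  proof (cases v)
    case True
    have "tR v phi n (z \<circ> inv p) y' = (\<Sum>i<n. real (z i) * phi (\<Sum>j<n. psi i j (y i) (y j)))"
      unfolding tR_def rank_def using True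
      by (subst inner1) (simp add: ip A)
    then show ?thesis unfolding tR_def rank_def using True by simp
  next
    case False
    have "tR v phi n (z \<circ> inv p) y' = (\<Sum>k<n. real ((z \<circ> inv p) k) * phi (\<Sum>l<n. (1 - (z \<circ> inv p) l) * psi k l (y' k) (y' l)))"
      unfolding tR_def using False by simp
    also have "\<dots> = (\<Sum>i<n. real ((z \<circ> inv p) (p i)) * phi (\<Sum>l<n. (1 - (z \<circ> inv p) l) * psi (p i) l (y' (p i)) (y' l)))"
      by (rule inner1)
    also have "\<dots> = (\<Sum>i<n. real (z i) * phi (\<Sum>j<n. (1 - z j) * psi i j (y i) (y j)))"
      by (intro sum.cong refl) (simp only: B ip comp_apply lessThan_iff)
    finally have "tR v phi n (z \<circ> inv p) y' = (\<Sum>i<n. real (z i) * phi (\<Sum>j<n. (1 - z j) * psi i j (y i) (y j)))" .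
    then show ?thesis unfolding tR_def using False by simp
  qed
qed

lemma exists_perm:
  fixes y :: "nat \<Rightarrow> real"
  shows "\<exists>p. p permutes {..<n} \<and> (\<forall>i<n. \<forall>j<n. psi i j (y i) (y j) = psi (p i) (p j) 0 0)"
proof -
  define p where "p i = (if i < n then card {j\<in>{..<n}. (y j, j) < (y i, i)} else i)" for i
  have mono: "p j < p i" if "i < n" "j < n" "(y j, j) < (y i, i)" for i j
  proof -
    have "{k\<in>{..<n}. (y k, k) < (y j, j)} \<subset> {k\<in>{..<n}. (y k, k) < (y i, i)}"
      using that by (auto intro: less_trans)
    then show ?thesis using that unfolding p_def by (simp add: psubset_card_mono)
  qed
  have key: "(p j \<le> p i) = ((y j, j) \<le> (y i, i))" if "i < n" "j < n" for i j
  proof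
    assume "p j \<le> p i" then show "(y j, j) \<le> (y i, i)"
      using mono[of j i] that by (meson not_le)
  next
    assume "(y j, j) \<le> (y i, i)"
    then have "(y j, j) < (y i, i) \<or> i = j" by (auto simp: order.order_iff_strict)
    then show "p j \<le> p i" using mono[of i j] that by auto
  qed
  have inj: "inj_on p {..<n}"
  proof (rule inj_onI)
    fix i j assume "i \<in> {..<n}" "j \<in> {..<n}" "p i = p j"
    then show "i = j" using key[of i j] key[of j i] by auto
  qed
  have into: "p ` {..<n} \<subseteq> {..<n}"
  proof
    fix x assume "x \<in> p ` {..<n}"
    then obtain i where i: "i < n" "x = p i" by auto
    have "{j\<in>{..<n}. (y j, j) < (y i, i)} \<subseteq> {..<n} - {i}" by auto
    then have "card {j\<in>{..<n}. (y j, j) < (y i, i)} \<le> card ({..<n} - {i})"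
      by (intro card_mono) auto
    also have "\<dots> < n" using i by simp
    finally show "x \<in> {..<n}" using i unfolding p_def by simp
  qed
  have "bij_betw p {..<n} {..<n}"
    using inj into by (simp add: bij_betw_def endo_inj_surj)
  then have "p permutes {..<n}" by (rule bij_imp_permutes) (simp add: p_def)
  moreover have "\<forall>i<n. \<forall>j<n. psi i j (y i) (y j) = psi (p i) (p j) 0 0"
  proof (intro allI impI)
    fix i j assume ij: "i < n" "j < n"
    have "psi i j (y i) (y j) = (if (y j, j) \<le> (y i, i) then 1 else 0)" by (rule psi_lex)
    also have "\<dots> = (if p j \<le> p i then 1 else 0)" using key[OF ij(1) ij(2)] by simp
    also have "\<dots> = psi (p i) (p j) 0 0" by (simp only: psi_zero)
    finally show "psi i j (y i) (y j) = psi (p i) (p j) 0 0" .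
  qed
  ultimately show ?thesis by blast
qed

lemma CRE_comp:
  assumes p: "p permutes {..<n}" and z: "z \<in> CRE n n1"
  shows "z \<circ> p \<in> CRE n n1"
proof -
  have pin: "\<And>i. i < n \<Longrightarrow> p i < n" using permutes_in_image[OF p] by simp
  have pout: "\<And>i. n \<le> i \<Longrightarrow> p i = i" using permutes_not_in[OF p] by simp
  have "(\<Sum>i<n. (z \<circ> p) i) = (\<Sum>i<n. z i)" using sum.permute[OF p, of z] by simp
  then show ?thesis using z pin pout unfolding CRE_def by auto
qed

lemma count_inv:
  fixes y :: "nat \<Rightarrow> real"
  shows "card {z \<in> CRE n n1. c \<le> tR v phi n z y} = card {z \<in> CRE n n1. c \<le> tR v phi n z (\<lambda>_. 0)}"
proof -
  obtain p where p: "p permutes {..<n}"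
    and h: "\<forall>i<n. \<forall>j<n. psi i j (y i) (y j) = psi (p i) (p j) 0 0"
    using exists_perm by blast
  have ip: "inv p permutes {..<n}" using permutes_inv[OF p] .
  have eq: "tR v phi n z y = tR v phi n (z \<circ> inv p) (\<lambda>_. 0)" for z
    by (rule tR_perm[OF p]) (use h in simp)
  have "bij_betw (\<lambda>z. z \<circ> inv p) {z \<in> CRE n n1. c \<le> tR v phi n z y}
      {z \<in> CRE n n1. c \<le> tR v phi n z (\<lambda>_. 0)}"
  proof (rule bij_betwI[where g = "\<lambda>z. z \<circ> p"])
    show "(\<lambda>z. z \<circ> inv p) \<in> {z \<in> CRE n n1. c \<le> tR v phi n z y} \<rightarrow> {z \<in> CRE n n1. c \<le> tR v phi n z (\<lambda>_. 0)}"
      using CRE_comp[OF ip] eq by auto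
    show "(\<lambda>z. z \<circ> p) \<in> {z \<in> CRE n n1. c \<le> tR v phi n z (\<lambda>_. 0)} \<rightarrow> {z \<in> CRE n n1. c \<le> tR v phi n z y}"
      using CRE_comp[OF p] eq by (auto simp: comp_assoc permutes_inv_o[OF p])
    show "z \<circ> inv p \<circ> p = z" for z by (simp add: comp_assoc permutes_inv_o[OF p])
    show "z \<circ> p \<circ> inv p = z" for z by (simp add: comp_assoc permutes_inv_o[OF p])
  qed
  then show ?thesis by (rule bij_betw_same_card)
qed

lemma finite_CRE: "finite (CRE n n1)"
proof -
  have "CRE n n1 \<subseteq> {f. \<forall>x. (x \<in> {..<n} \<longrightarrow> f x \<in> {0,1}) \<and> (x \<notin> {..<n} \<longrightarrow> f x = 0)}"
    unfolding CRE_def by auto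
  then show ?thesis by (rule finite_subset) (rule finite_set_of_finite_funs; simp)
qed

lemma valid_generic:
  fixes S :: "'a set" and T :: "'a \<Rightarrow> real" and \<alpha> :: real
  assumes fin: "finite S" and a: "0 < \<alpha>"
  shows "real (card {s \<in> S. real (card {t \<in> S. T s \<le> T t}) / real (card S) \<le> \<alpha>}) / real (card S) \<le> \<alpha>"
proof -
  let ?G = "\<lambda>s. real (card {t \<in> S. T s \<le> T t}) / real (card S)"
  let ?E = "{s \<in> S. ?G s \<le> \<alpha>}"
  show ?thesis
  proof (cases "?E = {}")
    case True
    then have "card ?E = 0" by (simp only: card.empty)
    then show ?thesis using a by simp
  next
    case False
    have finE: "finite ?E" using fin by simp
    have "Min (T ` ?E) \<in> T ` ?E" using finE False by (intro Min_in) auto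
    then obtain s0 where s0E: "s0 \<in> ?E" and s0m: "T s0 = Min (T ` ?E)" by auto
    have s0: "s0 \<in> ?E" "\<forall>s\<in>?E. T s0 \<le> T s"
      using s0E s0m finE by auto
    have "?E \<subseteq> {t \<in> S. T s0 \<le> T t}" using s0(2) by auto
    then have "card ?E \<le> card {t \<in> S. T s0 \<le> T t}" by (intro card_mono) (use fin in auto)
    then have "real (card ?E) / real (card S) \<le> ?G s0"
      by (intro divide_right_mono) auto
    also have "\<dots> \<le> \<alpha>" using s0(1) by simp
    finally show ?thesis .
  qed
qed

theorem proposition1:
  fixes n n1 :: nat and Y1 Y0 :: "nat \<Rightarrow> real" and M1 M0 :: "nat \<Rightarrow> bool"
    and \<delta> :: "nat \<Rightarrow> real" and b :: real and phi :: "nat \<Rightarrow> real"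
    and v :: bool and y0 :: "nat \<Rightarrow> real" and \<alpha> :: real
  assumes "1 \<le> n1" and "n1 < n"
    and "mono phi"
    and sharp: "\<forall>i<n. M1 i = M0 i"
    and H: "\<forall>i<n. Y1 i - Y0 i = \<delta> i"
    and "0 < \<alpha>" and "\<alpha> < 1"
  shows "prob_CRE n n1
           (\<lambda>Z. GR v phi n n1 y0 (tR v phi n Z (w_vec Y1 Y0 M1 M0 \<delta> b Z)) \<le> \<alpha>) \<le> \<alpha>"
proof -
  define u where "u i = (if M0 i then Y0 i else b)" for i
  have wu: "tR v phi n Z (w_vec Y1 Y0 M1 M0 \<delta> b Z) = tR v phi n Z u" if "Z \<in> CRE n n1" for Z
  proof (rule tR_cong, intro allI impI)
    fix i assume i: "i < n"
    then have "Z i = 0 \<or> Z i = 1" using that unfolding CRE_def by auto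
    then show "w_vec Y1 Y0 M1 M0 \<delta> b Z i = u i"
      using sharp[rule_format, OF i] H[rule_format, OF i] unfolding w_vec_def u_def Let_def
      by (cases "Z i = 0") (simp_all add: algebra_simps)
  qed
  have G: "GR v phi n n1 y0 c = real (card {t \<in> CRE n n1. c \<le> tR v phi n t u}) / real (card (CRE n n1))" for c
    unfolding GR_def prob_CRE_def using count_inv[of n n1 c v phi y0] count_inv[of n n1 c v phi u] by simp
  have "{Z \<in> CRE n n1. GR v phi n n1 y0 (tR v phi n Z (w_vec Y1 Y0 M1 M0 \<delta> b Z)) \<le> \<alpha>}
      = {s \<in> CRE n n1. real (card {t \<in> CRE n n1. tR v phi n s u \<le> tR v phi n t u}) / real (card (CRE n n1)) \<le> \<alpha>}"
    using wu G by auto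
  then show ?thesis unfolding prob_CRE_def
    using valid_generic[OF finite_CRE \<open>0 < \<alpha>\<close>, of n n1 "\<lambda>s. tR v phi n s u"] by simp
qed

end
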